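(* For every integer $n\ge 2$, the $n$-abomination $\mathbb{X}_n$ is an Esakia space.
   Context: $\mathbb{N}=\{0,1,2,\dots\}$. Fix an integer $n\ge 2$ and put $N=2^{n+1}-1$. Let $T_n$ be the set of triples $\langle k_1,k_2,k_3\rangle$ of pairwise distinct natural numbers $\le N$, with a fixed enumeration $T_n=\{s_0,\dots,s_t\}$. Let $U_n$ be a set of pairwise distinct elements $a_m,b_m$ ($m\in\mathbb{N}$) and $c_{m,k},d_{m,k},e^a_{m,k},e^b_{m,k}$ ($m\in\mathbb{N}$, $0\le k\le N$). Define $x\prec y$ on $U_n$ iff one of: (1) $x=a_m$ and $y\in\{c_{m,k_1},c_{m,k_2}\}$, where $s_j=\langle k_1,k_2,k_3\rangle$ with $j\equiv m \bmod (t+1)$; (2) $x=b_m$ and $y\in\{c_{m,k_1},c_{m,k_3}\}$, with $s_j$ as in (1); (3) $m\ge1$, $x=c_{m,k}$, and either $y=e^a_{m-1,j}$ with $j\ne k$, or $y=e^b_{m-1,i}$ for any $i\le N$; (4) $x=d_{m,k}$ and $y=c_{m,j}$ with $j\neq k$; (5) $x=e^a_{m,k}$ and either $y=a_m$ or $y=d_{m,j}$ with $j\ne k$; (6) $x=e^b_{m,k}$ and either $y=b_m$ or $y=d_{m,j}$ with $j\ne k$. Let $\le$ be the reflexive transitive closure of $\prec$ (a partial order on $U_n$). The root compactification of a poset is obtained by adding a new least element $\bot$ and declaring a set $U$ open iff $\bot\notin U$ or $U$ is cofinite. The $n$-abomination $\mathbb{X}_n$ is the root compactification of $\langle U_n,\le\rangle$.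 An Esakia space is a compact ordered topological space in which ${\downarrow}U$ is clopen for every clopen $U$ and whenever $x\not\le y$ there is a clopen upset containing $x$ but not $y$. *)

theory Defs
  imports "HOL-Analysis.Analysis"
begin

text \<open>Elements of U_n: a_m, b_m, c_{m,k}, d_{m,k}, e^a_{m,k}, e^b_{m,k}.\<close>
datatype uel = A nat | B nat | C nat nat | D nat nat | EA nat nat | EB nat nat

definition bigN :: "nat \<Rightarrow> nat" where
  "bigN n = 2 ^ (n + 1) - 1"

definition triples :: "nat \<Rightarrow> (nat \<times> nat \<times> nat) set" where
  "triples n = {(k1, k2, k3). k1 \<le> bigN n \<and> k2 \<le> bigN n \<and> k3 \<le> bigN n
                 \<and> k1 \<noteq> k2 \<and> k1 \<noteq> k3 \<and> k2 \<noteq> k3}"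

definition Uset :: "nat \<Rightarrow> uel set" where
  "Uset n = range A \<union> range B
     \<union> {C m k | m k. k \<le> bigN n} \<union> {D m k | m k. k \<le> bigN n}
     \<union> {EA m k | m k. k \<le> bigN n} \<union> {EB m k | m k. k \<le> bigN n}"

text \<open>The covering relation \<prec> on U_n, for an enumeration s_0,...,s_t of T_n.\<close>
fun prec :: "nat \<Rightarrow> nat \<Rightarrow> (nat \<Rightarrow> nat \<times> nat \<times> nat) \<Rightarrow> uel \<Rightarrow> uel \<Rightarrow> bool" where
  "prec n t s (A m) y =
     (case s (m mod (t + 1)) of (k1, k2, k3) \<Rightarrow> y = C m k1 \<or> y = C m k2)"
| "prec n t s (B m) y =
     (case s (m mod (t + 1)) of (k1, k2, k3) \<Rightarrow> y = C m k1 \<or> y = C m k3)"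
| "prec n t s (C m k) y =
     (1 \<le> m \<and> k \<le> bigN n \<and>
      ((\<exists>j. j \<le> bigN n \<and> j \<noteq> k \<and> y = EA (m - 1) j) \<or>
       (\<exists>i. i \<le> bigN n \<and> y = EB (m - 1) i)))"
| "prec n t s (D m k) y =
     (k \<le> bigN n \<and> (\<exists>j. j \<le> bigN n \<and> j \<noteq> k \<and> y = C m j))"
| "prec n t s (EA m k) y =
     (k \<le> bigN n \<and> (y = A m \<or> (\<exists>j. j \<le> bigN n \<and> j \<noteq> k \<and> y = D m j)))"
| "prec n t s (EB m k) y =
     (k \<le> bigN n \<and> (y = B m \<or> (\<exists>j. j \<le> bigN n \<and> j \<noteq> k \<and> y = D m j)))"

definition Ule :: "nat \<Rightarrow> nat \<Rightarrow> (nat \<Rightarrow> nat \<times> nat \<times> nat) \<Rightarrow> uel \<Rightarrow> uel \<Rightarrow> bool" where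
  "Ule n t s = (prec n t s)\<^sup>*\<^sup>*"

text \<open>Root compactification of a poset (P, le): the new least element \<bottom> is None.\<close>
definition root_carrier :: "'a set \<Rightarrow> 'a option set" where
  "root_carrier P = insert None (Some ` P)"

definition root_le :: "('a \<Rightarrow> 'a \<Rightarrow> bool) \<Rightarrow> 'a option \<Rightarrow> 'a option \<Rightarrow> bool" where
  "root_le le x y = (case x of None \<Rightarrow> True
                      | Some a \<Rightarrow> (case y of None \<Rightarrow> False | Some b \<Rightarrow> le a b))"

definition root_top :: "'a set \<Rightarrow> 'a option topology" where
  "root_top P = topology (\<lambda>U. U \<subseteq> root_carrier P \<and>
                               (None \<notin> U \<or> finite (root_carrier P - U)))"

definition down_set :: "'a topology \<Rightarrow> ('a \<Rightarrow> 'a \<Rightarrow> bool) \<Rightarrow> 'a set \<Rightarrow> 'a set" where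
  "down_set T le U = {x \<in> topspace T. \<exists>u\<in>U. le x u}"

definition is_upset :: "'a topology \<Rightarrow> ('a \<Rightarrow> 'a \<Rightarrow> bool) \<Rightarrow> 'a set \<Rightarrow> bool" where
  "is_upset T le U \<longleftrightarrow> U \<subseteq> topspace T \<and> (\<forall>x\<in>U. \<forall>y\<in>topspace T. le x y \<longrightarrow> y \<in> U)"

definition esakia_space :: "'a topology \<Rightarrow> ('a \<Rightarrow> 'a \<Rightarrow> bool) \<Rightarrow> bool" where
  "esakia_space T le \<longleftrightarrow>
     compact_space T \<and>
     partial_order_on (topspace T) {(x, y). x \<in> topspace T \<and> y \<in> topspace T \<and> le x y} \<and>
     (\<forall>U. closedin T U \<and> openin T U \<longrightarrow>
          closedin T (down_set T le U) \<and> openin T (down_set T le U)) \<and>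
     (\<forall>x\<in>topspace T. \<forall>y\<in>topspace T. \<not> le x y \<longrightarrow>
        (\<exists>U. closedin T U \<and> openin T U \<and> is_upset T le U \<and> x \<in> U \<and> y \<notin> U))"

definition abom_top :: "nat \<Rightarrow> uel option topology" where
  "abom_top n = root_top (Uset n)"

definition abom_le :: "nat \<Rightarrow> nat \<Rightarrow> (nat \<Rightarrow> nat \<times> nat \<times> nat) \<Rightarrow> uel option \<Rightarrow> uel option \<Rightarrow> bool" where
  "abom_le n t s = root_le (Ule n t s)"

end

theory Submission
  imports Defs
begin

lemma root_istop: "istopology (\<lambda>U. U \<subseteq> root_carrier P \<and> (None \<notin> U \<or> finite (root_carrier P - U)))"
proof -
  let ?L = "\<lambda>U. U \<subseteq> root_carrier P \<and> (None \<notin> U \<or> finite (root_carrier P - U))"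
  have 1: "?L (S \<inter> T)" if S: "?L S" and T: "?L T" for S T
  proof -
    have "root_carrier P - (S \<inter> T) = (root_carrier P - S) \<union> (root_carrier P - T)" by blast
    then show ?thesis using S T by auto
  qed
  have 2: "?L (\<Union>K)" if K: "\<forall>K\<in>K. ?L K" for K
  proof (cases "None \<in> \<Union>K")
    case True
    then obtain K0 where "K0 \<in> K" "None \<in> K0" by blast
    then have "finite (root_carrier P - K0)" using K by blast
    moreover have "root_carrier P - \<Union>K \<subseteq> root_carrier P - K0" using \<open>K0 \<in> K\<close> by blast
    ultimately show ?thesis using K finite_subset by blast
  qed (use K in blast)
  show ?thesis unfolding istopology_def using 1 2 by blast
qed

lemma openin_root: "openin (root_top P) U \<longleftrightarrow> U \<subseteq> root_carrier P \<and> (None \<notin> U \<or> finite (root_carrier P - U))"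
  by (simp only: root_top_def topology_inverse'[OF root_istop])

lemma topspace_root: "topspace (root_top P) = root_carrier P"
proof -
  have "openin (root_top P) (root_carrier P)" unfolding openin_root by simp
  then have "root_carrier P \<subseteq> topspace (root_top P)" by (rule openin_subset)
  moreover have "topspace (root_top P) \<subseteq> root_carrier P"
    unfolding topspace_def openin_root by blast
  ultimately show ?thesis by blast
qed

lemma closedin_root: "closedin (root_top P) U \<longleftrightarrow> U \<subseteq> root_carrier P \<and> (None \<in> U \<or> finite U)"
proof -
  have N: "None \<in> root_carrier P" by (simp add: root_carrier_def)
  have "closedin (root_top P) U \<longleftrightarrow> U \<subseteq> root_carrier P \<and> openin (root_top P) (root_carrier P - U)"
    by (simp add: closedin_def topspace_root)
  moreover have "U \<subseteq> root_carrier P \<Longrightarrow> openin (root_top P) (root_carrier P - U) \<longleftrightarrow> (None \<in> U \<or> finite U)"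
  proof -
    assume U: "U \<subseteq> root_carrier P"
    have e: "root_carrier P - (root_carrier P - U) = U" using U by blast
    have "None \<notin> root_carrier P - U \<longleftrightarrow> None \<in> U" using N by blast
    then show ?thesis unfolding openin_root e by simp
  qed
  ultimately show ?thesis by blast
qed

lemma clopen1: "X \<subseteq> root_carrier P \<Longrightarrow> None \<in> X \<Longrightarrow> finite (root_carrier P - X) \<Longrightarrow>
   closedin (root_top P) X \<and> openin (root_top P) X"
  by (simp add: closedin_root openin_root)

lemma clopen2: "X \<subseteq> root_carrier P \<Longrightarrow> None \<notin> X \<Longrightarrow> finite X \<Longrightarrow>
   closedin (root_top P) X \<and> openin (root_top P) X"
  by (simp add: closedin_root openin_root)

lemma compact_root: "compact_space (root_top P)"
  unfolding compact_space_alt topspace_root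
proof (intro allI impI)
  fix \<U> assume h: "(\<forall>U\<in>\<U>. openin (root_top P) U) \<and> root_carrier P \<subseteq> \<Union>\<U>"
  have "None \<in> root_carrier P" by (simp add: root_carrier_def)
  then obtain U0 where U0: "U0 \<in> \<U>" "None \<in> U0" using h by blast
  then have fin: "finite (root_carrier P - U0)" using h openin_root by blast
  have "\<forall>x\<in>root_carrier P - U0. \<exists>U\<in>\<U>. x \<in> U" using h by blast
  then obtain f where f: "\<forall>x\<in>root_carrier P - U0. f x \<in> \<U> \<and> x \<in> f x" by metis
  show "\<exists>\<F>. finite \<F> \<and> \<F> \<subseteq> \<U> \<and> root_carrier P \<subseteq> \<Union>\<F>"
    by (rule exI[of _ "insert U0 (f ` (root_carrier P - U0))"]) (use fin f U0 in auto)
qed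

fun rk :: "uel \<Rightarrow> nat" where
  "rk (A m) = 4*m+2" | "rk (B m) = 4*m+2" | "rk (C m k) = 4*m+1" | "rk (D m k) = 4*m+2"
| "rk (EA m k) = 4*m+3" | "rk (EB m k) = 4*m+3"

fun lev :: "uel \<Rightarrow> nat" where
  "lev (A m) = m" | "lev (B m) = m" | "lev (C m k) = m" | "lev (D m k) = m"
| "lev (EA m k) = m" | "lev (EB m k) = m"

lemma prec_rk: "prec n t s x y \<Longrightarrow> rk y < rk x"
  by (cases x) (auto split: prod.splits)

lemma prec_lev: "prec n t s x y \<Longrightarrow> lev y \<le> lev x"
  by (cases x) (auto split: prod.splits)

lemma tranclp_rk: "(prec n t s)\<^sup>+\<^sup>+ x y \<Longrightarrow> rk y < rk x"
  by (induction rule: tranclp_induct) (auto dest: prec_rk)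

lemma Ule_rk: "Ule n t s x y \<Longrightarrow> rk y \<le> rk x"
  unfolding Ule_def by (induction rule: rtranclp_induct) (auto dest: prec_rk)

lemma Ule_antisym: "Ule n t s x y \<Longrightarrow> Ule n t s y x \<Longrightarrow> x = y"
  using Ule_rk[of n t s y x] tranclp_rk[of n t s x y] rtranclpD[of "prec n t s" x y]
  unfolding Ule_def by fastforce

lemma Ule_refl: "Ule n t s x x" unfolding Ule_def by simp

lemma Ule_trans: "Ule n t s x y \<Longrightarrow> Ule n t s y z \<Longrightarrow> Ule n t s x z"
  unfolding Ule_def by simp

lemma Ule_step: "prec n t s x y \<Longrightarrow> Ule n t s x y"
  unfolding Ule_def by simp

lemma Ule_step2: "prec n t s x y \<Longrightarrow> Ule n t s y z \<Longrightarrow> Ule n t s x z"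
  unfolding Ule_def by simp

lemma prec_Uset:
  assumes hs: "\<forall>i\<le>t. s i \<in> triples n" and x: "x \<in> Uset n" and p: "prec n t s x y"
  shows "y \<in> Uset n"
proof -
  have sm: "s (m mod (t+1)) \<in> triples n" for m using hs by simp
  have C: "C m k \<in> Uset n" "D m k \<in> Uset n" "EA m k \<in> Uset n" "EB m k \<in> Uset n"
    if "k \<le> bigN n" for m k using that by (auto simp: Uset_def)
  have AB: "A m \<in> Uset n" "B m \<in> Uset n" for m by (auto simp: Uset_def)
  show ?thesis
  proof (cases x)
    case (A m)
    obtain k1 k2 k3 where "s (m mod (t+1)) = (k1,k2,k3)" by (cases "s (m mod (t+1))") auto
    then show ?thesis using sm[of m] p A C by (auto simp: triples_def)
  next
    case (B m)
    obtain k1 k2 k3 where "s (m mod (t+1)) = (k1,k2,k3)" by (cases "s (m mod (t+1))") auto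
    then show ?thesis using sm[of m] p B C by (auto simp: triples_def)
  qed (use p C AB in auto)
qed

lemma Ule_Uset:
  assumes hs: "\<forall>i\<le>t. s i \<in> triples n" and x: "x \<in> Uset n" and p: "Ule n t s x y"
  shows "y \<in> Uset n \<and> lev y \<le> lev x"
  using p unfolding Ule_def
proof (induction rule: rtranclp_induct)
  case base then show ?case using x by simp
next
  case (step y z)
  then show ?case using prec_Uset[OF hs, of y z] prec_lev[of n t s y z] by simp
qed

lemma Uset_simps[simp]:
  "A m \<in> Uset n" "B m \<in> Uset n"
  "C m k \<in> Uset n \<longleftrightarrow> k \<le> bigN n" "D m k \<in> Uset n \<longleftrightarrow> k \<le> bigN n"
  "EA m k \<in> Uset n \<longleftrightarrow> k \<le> bigN n" "EB m k \<in> Uset n \<longleftrightarrow> k \<le> bigN n"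
  by (auto simp: Uset_def)

lemma finite_lev: "finite {x \<in> Uset n. lev x \<le> M}"
proof -
  let ?K = "{..M} \<times> {..bigN n}"
  have "{x \<in> Uset n. lev x \<le> M} \<subseteq> A ` {..M} \<union> B ` {..M} \<union> case_prod C ` ?K \<union> case_prod D ` ?K
     \<union> case_prod EA ` ?K \<union> case_prod EB ` ?K" (is "_ \<subseteq> ?R")
  proof
    fix x assume "x \<in> {x \<in> Uset n. lev x \<le> M}"
    then have x: "x \<in> Uset n" "lev x \<le> M" by auto
    show "x \<in> ?R"
    proof (cases x)
      case (C m k) then have "k \<le> bigN n" using x(1) by simp
      then have "x \<in> case_prod C ` ?K" using C x by (auto intro!: image_eqI[of _ _ "(m,k)"])
      then show ?thesis by blast
    next
      case (D m k) then have "k \<le> bigN n" using x(1) by simp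
      then have "x \<in> case_prod D ` ?K" using D x by (auto intro!: image_eqI[of _ _ "(m,k)"])
      then show ?thesis by blast
    next
      case (EA m k) then have "k \<le> bigN n" using x(1) by simp
      then have "x \<in> case_prod EA ` ?K" using EA x by (auto intro!: image_eqI[of _ _ "(m,k)"])
      then show ?thesis by blast
    next
      case (EB m k) then have "k \<le> bigN n" using x(1) by simp
      then have "x \<in> case_prod EB ` ?K" using EB x by (auto intro!: image_eqI[of _ _ "(m,k)"])
      then show ?thesis by blast
    qed (use x in auto)
  qed
  moreover have "finite ?R" by blast
  ultimately show ?thesis by (rule finite_subset)
qed

definition oth :: "nat \<Rightarrow> nat" where "oth j = (if j = 0 then 1 else 0)"

lemma oth_ne: "oth j \<noteq> j" by (auto simp: oth_def)
lemma oth_le: "1 \<le> N \<Longrightarrow> oth j \<le> N" by (auto simp: oth_def)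

lemma pCEA: "j \<le> bigN n \<Longrightarrow> j \<noteq> k \<Longrightarrow> k \<le> bigN n \<Longrightarrow> prec n t s (C (Suc p) k) (EA p j)"
  by auto
lemma pCEB: "i \<le> bigN n \<Longrightarrow> k \<le> bigN n \<Longrightarrow> prec n t s (C (Suc p) k) (EB p i)"
  by auto
lemma pEAA: "k \<le> bigN n \<Longrightarrow> prec n t s (EA m k) (A m)" by simp
lemma pEBB: "k \<le> bigN n \<Longrightarrow> prec n t s (EB m k) (B m)" by simp
lemma pEBD: "j \<le> bigN n \<Longrightarrow> j \<noteq> k \<Longrightarrow> k \<le> bigN n \<Longrightarrow> prec n t s (EB m k) (D m j)" by auto
lemma pDC: "j \<le> bigN n \<Longrightarrow> j \<noteq> k \<Longrightarrow> k \<le> bigN n \<Longrightarrow> prec n t s (D m k) (C m j)" by auto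
lemma pAC: "s (m mod (t+1)) = (k1,k2,k3) \<Longrightarrow> prec n t s (A m) (C m k1)" by simp
lemma pBC: "s (m mod (t+1)) = (k1,k2,k3) \<Longrightarrow> prec n t s (B m) (C m k1)" by simp

lemma C_down:
  assumes N: "1 \<le> bigN n" and k: "k \<le> bigN n" and y: "y \<in> Uset n" "lev y = p" "y \<noteq> EA p k"
  shows "Ule n t s (C (Suc p) k) y"
proof (cases y)
  case (A m)
  then have "m = p" using y by simp
  show ?thesis unfolding A \<open>m = p\<close>
    by (rule Ule_step2[OF pCEA[of "oth k"]]) (use oth_ne[of k] oth_le[OF N, of k] k in \<open>auto intro!: Ule_step pEAA\<close>)
next
  case (B m)
  then have "m = p" using y by simp
  show ?thesis unfolding B \<open>m = p\<close>
    by (rule Ule_step2[OF pCEB[of 0]]) (use N k in \<open>auto intro!: Ule_step pEBB\<close>)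
next
  case (C m j)
  then have "m = p" "j \<le> bigN n" using y by auto
  let ?j1 = "oth j" and ?i = "oth (oth j)"
  have j1: "?j1 \<le> bigN n" "?j1 \<noteq> j" using oth_le[OF N] oth_ne by auto
  have i: "?i \<le> bigN n" "?i \<noteq> ?j1" using oth_le[OF N] oth_ne by auto
  have s1: "prec n t s (C (Suc p) k) (EB p ?i)" using pCEB[OF i(1) k] .
  have s2: "prec n t s (EB p ?i) (D p ?j1)" using pEBD[OF j1(1) i(2)[symmetric] i(1)] .
  have s3: "prec n t s (D p ?j1) (C p j)" using pDC[OF \<open>j \<le> bigN n\<close> j1(2)[symmetric] j1(1)] .
  have "Ule n t s (C (Suc p) k) (C p j)"
    using Ule_step2[OF s1 Ule_step2[OF s2 Ule_step[OF s3]]] .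
  then show ?thesis using C \<open>m = p\<close> by simp
next
  case (D m j)
  then have "m = p" "j \<le> bigN n" using y by auto
  have "Ule n t s (C (Suc p) k) (D p j)"
    apply (rule Ule_step2[OF pCEB[of "oth j"]])
    using oth_ne[of j] oth_le[OF N, of j] k \<open>j \<le> bigN n\<close>
    by (auto intro!: Ule_step pEBD)
  then show ?thesis using D \<open>m = p\<close> by simp
next
  case (EA m j)
  then have "m = p" "j \<le> bigN n" "j \<noteq> k" using y by auto
  then show ?thesis using EA k by (auto intro!: Ule_step pCEA)
next
  case (EB m j)
  then have "m = p" "j \<le> bigN n" using y by auto
  then show ?thesis using EB k by (auto intro!: Ule_step pCEB)
qed

lemma C_down_all:
  assumes N: "1 \<le> bigN n"
  shows "k \<le> bigN n \<Longrightarrow> y \<in> Uset n \<Longrightarrow> lev y < Suc p \<Longrightarrow> y \<noteq> EA p k \<Longrightarrow> Ule n t s (C (Suc p) k) y"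
proof (induction p arbitrary: k y)
  case 0
  then show ?case using C_down[OF N] by simp
next
  case (Suc q)
  show ?case
  proof (cases "lev y = Suc q")
    case True
    then show ?thesis using C_down[OF N] Suc.prems by simp
  next
    case False
    then have ly: "lev y < Suc q" using Suc.prems by simp
    define j where "j = (if y = EA q 0 then 1 else (0::nat))"
    have j: "j \<le> bigN n" "y \<noteq> EA q j" using N by (auto simp: j_def)
    have "Ule n t s (C (Suc (Suc q)) k) (C (Suc q) j)"
      using C_down[OF N, of k "C (Suc q) j" "Suc q"] Suc.prems j by simp
    moreover have "Ule n t s (C (Suc q) j) y" using Suc.IH[OF j(1) Suc.prems(2) ly j(2)] .
    ultimately show ?thesis by (rule Ule_trans)
  qed
qed

lemma to_C:
  assumes hs: "\<forall>i\<le>t. s i \<in> triples n" and N: "1 \<le> bigN n" and x: "x \<in> Uset n"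
  shows "\<exists>k. k \<le> bigN n \<and> Ule n t s x (C (lev x) k)"
proof -
  have sm: "s (m mod (t+1)) \<in> triples n" for m using hs by simp
  have AC: "\<exists>k. k \<le> bigN n \<and> Ule n t s (A m) (C m k)" for m
  proof -
    obtain k1 k2 k3 where e: "s (m mod (t+1)) = (k1,k2,k3)" by (cases "s (m mod (t+1))") auto
    then have "k1 \<le> bigN n" using sm[of m] by (simp add: triples_def)
    then show ?thesis using e Ule_step[of n t s "A m" "C m k1"] by auto
  qed
  have BC: "\<exists>k. k \<le> bigN n \<and> Ule n t s (B m) (C m k)" for m
  proof -
    obtain k1 k2 k3 where e: "s (m mod (t+1)) = (k1,k2,k3)" by (cases "s (m mod (t+1))") auto
    then have "k1 \<le> bigN n" using sm[of m] by (simp add: triples_def)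
    then show ?thesis using e Ule_step[of n t s "B m" "C m k1"] by auto
  qed
  show ?thesis
  proof (cases x)
    case (A m) then show ?thesis using AC by simp
  next
    case (B m) then show ?thesis using BC by simp
  next
    case (C m k) then show ?thesis using x Ule_refl by auto
  next
    case (D m k)
    then have "k \<le> bigN n" using x by simp
    then have "Ule n t s (D m k) (C m (oth k))" using oth_ne[of k] oth_le[OF N, of k] by (auto intro!: Ule_step pDC)
    then show ?thesis using D oth_ne[of k] oth_le[OF N, of k] by auto
  next
    case (EA m k)
    then have "k \<le> bigN n" using x by simp
    then show ?thesis using EA AC[of m] Ule_step2[OF pEAA] by auto
  next
    case (EB m k)
    then have "k \<le> bigN n" using x by simp
    then show ?thesis using EB BC[of m] Ule_step2[OF pEBB] by auto
  qed
qed

lemma reach_far: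
  assumes hs: "\<forall>i\<le>t. s i \<in> triples n" and N: "1 \<le> bigN n" and x: "x \<in> Uset n"
    and u: "u \<in> Uset n" and l: "lev u + 2 \<le> lev x"
  shows "Ule n t s x u"
proof -
  obtain k where k: "k \<le> bigN n" "Ule n t s x (C (lev x) k)" using to_C[OF hs N x] by blast
  obtain p where p: "lev x = Suc p" using l by (cases "lev x") auto
  have "u \<noteq> EA p k" using l p by auto
  then have "Ule n t s (C (Suc p) k) u" using C_down_all[OF N k(1) u] l p by simp
  then show ?thesis using k(2) p Ule_trans by metis
qed

lemma root_le_refl: "(\<And>a. R a a) \<Longrightarrow> root_le R x x"
  by (cases x) (auto simp: root_le_def)

lemma root_le_trans: "(\<And>a b c. R a b \<Longrightarrow> R b c \<Longrightarrow> R a c) \<Longrightarrow> root_le R x y \<Longrightarrow> root_le R y z \<Longrightarrow> root_le R x z"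
  by (cases x; cases y; cases z) (auto simp: root_le_def)

lemma root_le_antisym: "(\<And>a b. R a b \<Longrightarrow> R b a \<Longrightarrow> a = b) \<Longrightarrow> root_le R x y \<Longrightarrow> root_le R y x \<Longrightarrow> x = y"
  by (cases x; cases y) (auto simp: root_le_def)

lemma root_le_None[simp]: "root_le R None y" "root_le R (Some a) None = False" "root_le R (Some a) (Some b) = R a b"
  by (auto simp: root_le_def)

lemma root_carrier_Some[simp]: "Some a \<in> root_carrier P \<longleftrightarrow> a \<in> P" "None \<in> root_carrier P"
  by (auto simp: root_carrier_def)

lemma rl_refl: "root_le (Ule n t s) x x"
  by (cases x) (auto simp: root_le_def Ule_refl)
lemma rl_trans: "root_le (Ule n t s) x y \<Longrightarrow> root_le (Ule n t s) y z \<Longrightarrow> root_le (Ule n t s) x z"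
  by (cases x; cases y; cases z) (auto simp: root_le_def intro: Ule_trans)
lemma rl_antisym: "root_le (Ule n t s) x y \<Longrightarrow> root_le (Ule n t s) y x \<Longrightarrow> x = y"
  by (cases x; cases y) (auto simp: root_le_def intro: Ule_antisym)

theorem mainTheorem4:
  fixes n t :: nat and s :: "nat \<Rightarrow> nat \<times> nat \<times> nat"
  assumes "n \<ge> 2"
    and "bij_betw s {..t} (triples n)"
  shows "esakia_space (abom_top n) (abom_le n t s)"
proof -
  have hs: "\<forall>i\<le>t. s i \<in> triples n" using assms(2) bij_betw_apply by fastforce
  have p1: "(1::nat) \<le> 2 ^ n" by simp
  have "bigN n = 2 * 2 ^ n - 1" by (simp add: bigN_def)
  with p1 have N: "1 \<le> bigN n" by linarith
  let ?C = "root_carrier (Uset n)"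
  let ?T = "root_top (Uset n)"
  let ?R = "Ule n t s"
  let ?le = "root_le ?R"
  have T: "abom_top n = ?T" "abom_le n t s = ?le" by (simp_all add: abom_top_def abom_le_def)
  have P1: "compact_space ?T" by (rule compact_root)
  have P2: "partial_order_on ?C {(x, y). x \<in> ?C \<and> y \<in> ?C \<and> ?le x y}"
    unfolding partial_order_on_def preorder_on_def refl_on_def trans_def antisym_def
    using rl_refl[of n t s] rl_trans[of n t s] rl_antisym[of n t s] by blast
  have P3: "closedin ?T (down_set ?T ?le U) \<and> openin ?T (down_set ?T ?le U)"
    if U: "closedin ?T U \<and> openin ?T U" for U
  proof -
    have U1: "U \<subseteq> ?C" "None \<notin> U \<or> finite (?C - U)" "None \<in> U \<or> finite U"
      using U closedin_root openin_root by blast+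
    define D where "D = down_set ?T ?le U"
    have Deq: "D = {x \<in> ?C. \<exists>u\<in>U. ?le x u}" unfolding D_def down_set_def topspace_root ..
    have DC: "D \<subseteq> ?C" unfolding Deq by blast
    have "closedin ?T D \<and> openin ?T D"
    proof (cases "U = {}")
      case True
      then have "D = {}" unfolding Deq by blast
      then show ?thesis using clopen2[of "{}"] by simp
    next
      case False
      then obtain u0 where u0: "u0 \<in> U" by blast
      have ND: "None \<in> D" unfolding Deq using u0 by auto
      have fin: "finite (?C - D)"
      proof (cases "None \<in> U")
        case True
        then have f: "finite (?C - U)" using U1 by blast
        have "U \<subseteq> D" unfolding Deq using U1(1) rl_refl[of n t s] by blast
        then have "?C - D \<subseteq> ?C - U" by blast
        then show ?thesis using f finite_subset by blast
      next
        case False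
        then obtain u where u: "Some u \<in> U" using u0 by (cases u0) auto
        then have uU: "u \<in> Uset n" using U1(1) by auto
        have "?C - D \<subseteq> Some ` {x \<in> Uset n. lev x \<le> lev u + 1}"
        proof
          fix x assume x: "x \<in> ?C - D"
          then obtain a where a: "x = Some a" using ND by (cases x) auto
          then have aU: "a \<in> Uset n" using x by simp
          have "\<not> lev u + 2 \<le> lev a"
          proof
            assume "lev u + 2 \<le> lev a"
            then have "?R a u" using reach_far[OF hs N aU uU] by simp
            then have "x \<in> D" unfolding Deq using a aU u by (auto intro!: bexI[of _ "Some u"])
            then show False using x by blast
          qed
          then show "x \<in> Some ` {x \<in> Uset n. lev x \<le> lev u + 1}" using a aU by auto
        qed
        then show ?thesis using finite_lev[of n "lev u + 1"] finite_subset by blast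
      qed
      show ?thesis by (rule clopen1[OF DC ND fin])
    qed
    then show ?thesis unfolding D_def .
  qed
  have P4: "\<exists>U. closedin ?T U \<and> openin ?T U \<and> is_upset ?T ?le U \<and> x \<in> U \<and> y \<notin> U"
    if x: "x \<in> ?C" and y: "y \<in> ?C" and nle: "\<not> ?le x y" for x y
  proof -
    obtain a where a: "x = Some a" using nle by (cases x) auto
    then have aU: "a \<in> Uset n" using x by simp
    define U where "U = Some ` {b. ?R a b}"
    have sub: "{b. ?R a b} \<subseteq> {b \<in> Uset n. lev b \<le> lev a}" using Ule_Uset[OF hs aU] by blast
    then have fU: "finite U" unfolding U_def using finite_lev finite_subset by blast
    have UC: "U \<subseteq> ?C" unfolding U_def using sub by auto
    have NU: "None \<notin> U" unfolding U_def by auto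
    have up: "is_upset ?T ?le U"
      unfolding is_upset_def topspace_root
    proof (intro conjI UC ballI impI)
      fix v w assume v: "v \<in> U" and w: "w \<in> ?C" and vw: "?le v w"
      obtain b where b: "v = Some b" "?R a b" using v unfolding U_def by blast
      then obtain c where c: "w = Some c" "?R b c" using vw by (cases w) auto
      then show "w \<in> U" unfolding U_def using b Ule_trans by blast
    qed
    have xU: "x \<in> U" unfolding U_def a using Ule_refl by blast
    have yU: "y \<notin> U"
    proof
      assume "y \<in> U"
      then obtain c where "y = Some c" "?R a c" unfolding U_def by blast
      then show False using nle a by simp
    qed
    show ?thesis using clopen2[OF UC NU fU] up xU yU by blast
  qed
  show ?thesis unfolding esakia_space_def T topspace_root
    using P1 P2 P3 P4 by blast
qed

end
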